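(* Let $(\Sigma_+,\Sigma_-,N_1,N_2,N_3)$ be a solution of the Wainwright–Hsu system satisfying the constraint, with $N_1<0$ and $N_2,N_3>0$, and let $r=(\Sigma_-^2+\frac34(N_2-N_3)^2)^{1/2}$. There exist $T$ (depending on the solution) and a numerical constant $C$ such that the following holds: if $\tau_a<\tau_b$ are consecutive zeros of $\Sigma_-$ with $\tau_a\geq T$ and $r(\tau_a)\geq[(N_2+N_3)(\tau_a)]^{-1/2}$, and if $z_1=\Sigma_+(\tau_a)$, $z_2=\Sigma_+(\tau_b)$, $w_1=-[N_1(N_2+N_3)](\tau_a)$, $w_2=-[N_1(N_2+N_3)](\tau_b)$, then $$z_2-z_1=\Big[-(1-z_1)(1+z_1)^2+\tfrac32w_1(2-z_1)\Big](\tau_b-\tau_a)+\epsilon_1,$$ $$w_2-w_1=(2z_1^2-2z_1+2-3w_1)\,w_1\,(\tau_b-\tau_a)+\epsilon_2,$$ where $|\epsilon_i|\leq C\,[(N_2+N_3)(\tau_a)]^{-3/2}$ for $i=1,2$.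
   Context: Wainwright–Hsu system: for functions $N_1,N_2,N_3,\Sigma_+,\Sigma_-$ of $\tau\in\mathbb{R}$ (prime denotes $d/d\tau$), $N_1'=(q-4\Sigma_+)N_1$, $N_2'=(q+2\Sigma_++2\sqrt3\Sigma_-)N_2$, $N_3'=(q+2\Sigma_+-2\sqrt3\Sigma_-)N_3$, $\Sigma_+'=-(2-q)\Sigma_+-3S_+$, $\Sigma_-'=-(2-q)\Sigma_--3S_-$, where $q=2(\Sigma_+^2+\Sigma_-^2)$, $S_+=\frac12[(N_2-N_3)^2-N_1(2N_1-N_2-N_3)]$, $S_-=\frac{\sqrt3}{2}(N_3-N_2)(N_1-N_2-N_3)$, together with the constraint $\Sigma_+^2+\Sigma_-^2+\frac34[N_1^2+N_2^2+N_3^2-2(N_1N_2+N_2N_3+N_1N_3)]=1$. Solutions with these sign conditions exist for all $\tau\in\mathbb{R}$. "Consecutive zeros" means $\Sigma_-(\tau_a)=\Sigma_-(\tau_b)=0$ and $\Sigma_-\neq0$ on $(\tau_a,\tau_b)$. *)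

theory Defs
  imports "HOL-Analysis.Analysis"
begin

definition WH_q :: "real \<Rightarrow> real \<Rightarrow> real" where
  "WH_q sp sm = 2 * (sp^2 + sm^2)"

definition WH_Splus :: "real \<Rightarrow> real \<Rightarrow> real \<Rightarrow> real" where
  "WH_Splus n1 n2 n3 = (1/2) * ((n2 - n3)^2 - n1 * (2*n1 - n2 - n3))"

definition WH_Sminus :: "real \<Rightarrow> real \<Rightarrow> real \<Rightarrow> real" where
  "WH_Sminus n1 n2 n3 = (sqrt 3 / 2) * (n3 - n2) * (n1 - n2 - n3)"

definition WH_solution ::
  "(real \<Rightarrow> real) \<Rightarrow> (real \<Rightarrow> real) \<Rightarrow> (real \<Rightarrow> real) \<Rightarrow> (real \<Rightarrow> real) \<Rightarrow> (real \<Rightarrow> real) \<Rightarrow> bool" where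
  "WH_solution N1 N2 N3 Sp Sm \<longleftrightarrow>
    (\<forall>t. (N1 has_real_derivative ((WH_q (Sp t) (Sm t) - 4 * Sp t) * N1 t)) (at t)
       \<and> (N2 has_real_derivative ((WH_q (Sp t) (Sm t) + 2 * Sp t + 2 * sqrt 3 * Sm t) * N2 t)) (at t)
       \<and> (N3 has_real_derivative ((WH_q (Sp t) (Sm t) + 2 * Sp t - 2 * sqrt 3 * Sm t) * N3 t)) (at t)
       \<and> (Sp has_real_derivative (- (2 - WH_q (Sp t) (Sm t)) * Sp t - 3 * WH_Splus (N1 t) (N2 t) (N3 t))) (at t)
       \<and> (Sm has_real_derivative (- (2 - WH_q (Sp t) (Sm t)) * Sm t - 3 * WH_Sminus (N1 t) (N2 t) (N3 t))) (at t)
       \<and> (Sp t)^2 + (Sm t)^2 + (3/4) * ((N1 t)^2 + (N2 t)^2 + (N3 t)^2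
            - 2 * (N1 t * N2 t + N2 t * N3 t + N1 t * N3 t)) = 1)"

definition consecutive_zeros :: "(real \<Rightarrow> real) \<Rightarrow> real \<Rightarrow> real \<Rightarrow> bool" where
  "consecutive_zeros f a b \<longleftrightarrow> a < b \<and> f a = 0 \<and> f b = 0 \<and> (\<forall>t. a < t \<and> t < b \<longrightarrow> f t \<noteq> 0)"

end

theory Submission
  imports Defs
begin

definition FF :: "real \<Rightarrow> real \<Rightarrow> real" where "FF z w = - (1 - z) * (1 + z)^2 + (3/2) * w * (2 - z)"
definition GG :: "real \<Rightarrow> real \<Rightarrow> real" where "GG z w = (2 * z^2 - 2 * z + 2 - 3 * w) * w"

lemma abs_lin2:
  fixes a b A B p r :: real
  assumes "\<bar>A\<bar> \<le> p" "\<bar>B\<bar> \<le> r"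
  shows "\<bar>a * A + b * B\<bar> \<le> p * \<bar>a\<bar> + r * \<bar>b\<bar>"
proof -
  have "\<bar>a * A + b * B\<bar> \<le> \<bar>a\<bar> * \<bar>A\<bar> + \<bar>b\<bar> * \<bar>B\<bar>" by (metis abs_mult abs_triangle_ineq)
  also have "\<dots> \<le> \<bar>a\<bar> * p + \<bar>b\<bar> * r" using assms by (intro add_mono mult_left_mono) auto
  finally show ?thesis by (simp add: mult.commute)
qed

lemma ab1: "\<bar>a\<bar> \<le> 1 \<Longrightarrow> \<bar>b\<bar> \<le> 1 \<Longrightarrow> \<bar>a * (b::real)\<bar> \<le> 1"
  by (simp add: abs_mult mult_le_one)

lemma FF_lip:
  assumes "\<bar>z\<bar> \<le> 1" "\<bar>za\<bar> \<le> 1" "0 \<le> w" "w \<le> 1" "0 \<le> wa" "wa \<le> 1"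
  shows "\<bar>FF z w - FF za wa\<bar> \<le> 7 * \<bar>z - za\<bar> + 5 * \<bar>w - wa\<bar>"
proof -
  have id: "FF z w - FF za wa = (z - za) * (-1 + (z + za) + (z * z + z * za + za * za) - 3/2 * w) + (w - wa) * (3 - 3/2 * za)"
    unfolding FF_def by (simp add: power2_eq_square field_simps)
  have "\<bar>z * z\<bar> \<le> 1" "\<bar>z * za\<bar> \<le> 1" "\<bar>za * za\<bar> \<le> 1" using assms by (intro ab1; simp)+
  moreover have "0 \<le> z * z + z * za + za * za"
  proof -
    have "z * z + z * za + za * za = (z + za / 2)^2 + 3 / 4 * za^2" by (simp add: power2_eq_square field_simps)
    then show ?thesis by simp
  qed
  ultimately have A: "\<bar>-1 + (z + za) + (z * z + z * za + za * za) - 3/2 * w\<bar> \<le> 7"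
    using assms unfolding abs_le_iff by (intro conjI; linarith)
  have B: "\<bar>3 - 3/2 * za\<bar> \<le> 5" using assms unfolding abs_le_iff by (intro conjI; linarith)
  show ?thesis unfolding id using abs_lin2[OF A B] by simp
qed

lemma GG_lip:
  assumes "\<bar>z\<bar> \<le> 1" "\<bar>za\<bar> \<le> 1" "0 \<le> w" "w \<le> 1" "0 \<le> wa" "wa \<le> 1"
  shows "\<bar>GG z w - GG za wa\<bar> \<le> 6 * \<bar>z - za\<bar> + 12 * \<bar>w - wa\<bar>"
proof -
  have id: "GG z w - GG za wa = (z - za) * (2 * (z * w) + 2 * (za * w) - 2 * w) + (w - wa) * (2 * (za * za) - 2 * za + 2 - 3 * (w + wa))"
    unfolding GG_def by (simp add: power2_eq_square algebra_simps)
  have "\<bar>z * w\<bar> \<le> 1" "\<bar>za * w\<bar> \<le> 1" "\<bar>za * za\<bar> \<le> 1" using assms by (intro ab1; simp)+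
  then have A: "\<bar>2 * (z * w) + 2 * (za * w) - 2 * w\<bar> \<le> 6"
    using assms unfolding abs_le_iff by (intro conjI; linarith)
  have B: "\<bar>2 * (za * za) - 2 * za + 2 - 3 * (w + wa)\<bar> \<le> 12" using \<open>\<bar>za * za\<bar> \<le> 1\<close> assms unfolding abs_le_iff by (smt (verit))
  show ?thesis unfolding id using abs_lin2[OF A B] by simp
qed


lemma basic_pt:
  fixes z x y m w n :: real
  assumes cons: "z^2 + x^2 + y^2 + 3/4 * m^2 + 3/2 * w = 1"
    and n1: "1 \<le> n" and m: "m < 0" and wd: "w = - m * n"
  shows "0 < w" "w \<le> 2/3" "\<bar>z\<bar> \<le> 1" "\<bar>x\<bar> \<le> 1" "\<bar>y\<bar> \<le> 1" "\<bar>m\<bar> \<le> 2/3 / n" "\<bar>m\<bar> \<le> 2/3"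
    "m^2 \<le> 1 / n" "\<bar>x * y\<bar> \<le> 1" "0 \<le> 2 * (z^2 + x^2)" "2 * (z^2 + x^2) \<le> 2"
proof -
  have sq: "0 \<le> z^2" "0 \<le> x^2" "0 \<le> y^2" "0 \<le> m^2" by simp_all
  show w0: "0 < w" using m n1 wd by (simp add: mult_neg_pos)
  show w1: "w \<le> 2/3" using cons sq by linarith
  have "z^2 \<le> 1" "x^2 \<le> 1" "y^2 \<le> 1" using cons sq w0 by linarith+
  then show zb: "\<bar>z\<bar> \<le> 1" and xb: "\<bar>x\<bar> \<le> 1" and yb: "\<bar>y\<bar> \<le> 1" by (simp_all add: abs_square_le_1)
  have mn: "\<bar>m\<bar> * n = w" using m wd by simp
  show mb: "\<bar>m\<bar> \<le> 2/3 / n" using mn w1 n1 by (simp add: field_simps)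
  have "2/3 / n \<le> 2/3" using n1 by (simp add: field_simps)
  then show mb1: "\<bar>m\<bar> \<le> 2/3" using mb by linarith
  have "m^2 = \<bar>m\<bar> * \<bar>m\<bar>" by (simp add: power2_eq_square)
  also have "\<dots> \<le> (2/3) * (2/3 / n)" using mb mb1 by (intro mult_mono) auto
  also have "\<dots> \<le> 1 / n" using n1 by (simp add: field_simps)
  finally show "m^2 \<le> 1 / n" .
  show "\<bar>x * y\<bar> \<le> 1" using xb yb by (simp add: abs_mult mult_le_one)
  show "0 \<le> 2 * (z^2 + x^2)" by simp
  have "z^2 + x^2 \<le> 1" using cons sq w0 by linarith
  then show "2 * (z^2 + x^2) \<le> 2" by simp
qed

lemma tri3: "\<bar>(a::real) + b - c\<bar> \<le> \<bar>a\<bar> + \<bar>b\<bar> + \<bar>c\<bar>"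
  using abs_ge_self[of a] abs_ge_self[of b] abs_ge_self[of c] abs_ge_minus_self[of a] abs_ge_minus_self[of b] abs_ge_minus_self[of c]
  unfolding abs_le_iff by (intro conjI; linarith)

lemma e_bound:
  fixes z x y m w n :: real
  assumes cons: "z^2 + x^2 + y^2 + 3/4 * m^2 + 3/2 * w = 1"
    and n1: "1 \<le> n" and m: "m < 0" and wd: "w = - m * n"
  shows "\<bar>- (2 - 2 * (z^2 + x^2)) * x * y / n + 3 * m * y^2 / n - 4 * x^2 * y^2 / n^2\<bar> \<le> 8 / n"
proof -
  note b = basic_pt[OF assms]
  have n0: "0 < n" using n1 by simp
  have t1: "\<bar>- (2 - 2 * (z^2 + x^2)) * x * y\<bar> \<le> 2"
  proof -
    have "\<bar>- (2 - 2 * (z^2 + x^2)) * x * y\<bar> = \<bar>2 - 2 * (z^2 + x^2)\<bar> * \<bar>x * y\<bar>" by (simp only: abs_mult abs_minus_cancel mult.assoc)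
    also have "\<dots> \<le> 2 * 1" using b(9-11) by (intro mult_mono) auto
    finally show ?thesis by simp
  qed
  have t2: "\<bar>3 * m * y^2\<bar> \<le> 2"
  proof -
    have y1: "y^2 \<le> 1" using b(5) by (simp add: abs_square_le_1)
    have "\<bar>3 * m * y^2\<bar> = 3 * \<bar>m\<bar> * y^2" by (simp add: abs_mult)
    also have "\<dots> \<le> 3 * (2/3) * 1" using b(7) y1 by (intro mult_mono) auto
    finally show ?thesis by simp
  qed
  have t3: "\<bar>4 * x^2 * y^2\<bar> \<le> 4"
  proof -
    have "(x * y)^2 \<le> 1" using b(9) by (simp add: abs_square_le_1)
    then have "x^2 * y^2 \<le> 1" by (simp add: power_mult_distrib)
    then show ?thesis by simp
  qed
  have s1: "\<bar>- (2 - 2 * (z^2 + x^2)) * x * y / n\<bar> \<le> 2 / n"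
    using t1 n0 by (simp add: abs_divide divide_right_mono)
  have s2: "\<bar>3 * m * y^2 / n\<bar> \<le> 2 / n"
    using t2 n0 by (simp add: abs_divide divide_right_mono)
  have s3: "\<bar>4 * x^2 * y^2 / n^2\<bar> \<le> 4 / n"
  proof -
    have "\<bar>4 * x^2 * y^2 / n^2\<bar> \<le> 4 / n^2" using t3 n0 by (simp add: abs_divide divide_right_mono)
    also have "4 / n^2 \<le> 4 / n" using n1 by (simp add: field_simps power2_eq_square)
    finally show ?thesis .
  qed
  have "\<bar>- (2 - 2 * (z^2 + x^2)) * x * y / n + 3 * m * y^2 / n - 4 * x^2 * y^2 / n^2\<bar>
      \<le> \<bar>- (2 - 2 * (z^2 + x^2)) * x * y / n\<bar> + \<bar>3 * m * y^2 / n\<bar> + \<bar>4 * x^2 * y^2 / n^2\<bar>"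
    by (rule tri3)
  then show ?thesis using s1 s2 s3 by simp
qed


lemma V_pt:
  fixes z x y m w n e u D Du :: real
  assumes cons: "z^2 + x^2 + y^2 + 3/4 * m^2 + 3/2 * w = 1"
    and n1: "1 \<le> n" and m: "m < 0" and wd: "w = - m * n"
    and De: "D = - (2 - 2 * (z^2 + x^2)) * z - 2 * y^2 + 3 * m^2 + 3/2 * w"
    and ee: "e = - (2 - 2 * (z^2 + x^2)) * x * y / n + 3 * m * y^2 / n - 4 * x^2 * y^2 / n^2"
    and Due: "Du = 3 * (x^2 - y^2) + e"
    and ue: "u = x * y / n"
  shows "\<bar>D - (D * u + Du * (z + 1)) / 3 - FF z w\<bar> \<le> 15 / n"
proof -
  note b = basic_pt[OF cons n1 m wd]
  have n0: "0 < n" using n1 by simp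
  have Y: "y^2 = 1 - z^2 - x^2 - 3/4 * m^2 - 3/2 * w" using cons by linarith
  have id1: "D - (z + 1) * (x^2 - y^2) - FF z w = m^2 * (3 - 3/4 * (z - 1))"
    unfolding De Y FF_def by algebra
  have id2: "D - (D * u + Du * (z + 1)) / 3 - FF z w = m^2 * (3 - 3/4 * (z - 1)) - D * u / 3 - (z + 1) * e / 3"
    using id1 unfolding Due by algebra
  have Db: "\<bar>D\<bar> \<le> 9"
  proof -
    have "\<bar>(2 - 2 * (z^2 + x^2)) * z\<bar> \<le> 2 * 1" unfolding abs_mult using b(3,10,11) by (intro mult_mono) auto
    moreover have "y^2 \<le> 1" using b(5) by (simp add: abs_square_le_1)
    moreover have "1 / n \<le> 1" using n1 by simp
    then have "m^2 \<le> 1" using b(8) by linarith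
    moreover have "- (2 - 2 * (z^2 + x^2)) * z = - ((2 - 2 * (z^2 + x^2)) * z)" by (rule mult_minus_left)
    ultimately show ?thesis unfolding De using b(1,2) zero_le_power2[of y] zero_le_power2[of m] unfolding abs_le_iff by argo
  qed
  have ub: "\<bar>u\<bar> \<le> 1 / n" unfolding ue using b(9) n0 by (simp add: abs_divide divide_right_mono)
  have eb: "\<bar>e\<bar> \<le> 8 / n" unfolding ee by (rule e_bound[OF cons n1 m wd])
  have r1: "\<bar>m^2 * (3 - 3/4 * (z - 1))\<bar> \<le> 5 / n"
  proof -
    have "\<bar>3 - 3/4 * (z - 1)\<bar> \<le> 5" using b(3) unfolding abs_le_iff by argo
    then have "\<bar>m^2 * (3 - 3/4 * (z - 1))\<bar> \<le> (1 / n) * 5" unfolding abs_mult using b(8) n0 by (intro mult_mono) auto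
    then show ?thesis by simp
  qed
  have r2: "\<bar>D * u / 3\<bar> \<le> 3 / n"
  proof -
    have "\<bar>D * u\<bar> \<le> 9 * (1 / n)" unfolding abs_mult using Db ub by (intro mult_mono) auto
    then show ?thesis by (simp add: abs_divide)
  qed
  have r3: "\<bar>(z + 1) * e / 3\<bar> \<le> 6 / n"
  proof -
    have "\<bar>z + 1\<bar> \<le> 2" using b(3) unfolding abs_le_iff by argo
    then have "\<bar>(z + 1) * e\<bar> \<le> 2 * (8 / n)" unfolding abs_mult using eb by (intro mult_mono) auto
    then show ?thesis by (simp add: abs_divide)
  qed
  have "\<bar>m^2 * (3 - 3/4 * (z - 1)) - D * u / 3 - (z + 1) * e / 3\<bar> \<le> 5 / n + 3 / n + 6 / n"
    using r1 r2 r3 unfolding abs_le_iff by argo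
  also have "\<dots> \<le> 15 / n" using n0 by (simp add: field_simps)
  finally show ?thesis unfolding id2 .
qed

lemma W_pt:
  fixes z x y m w n e u Dw Du :: real
  assumes cons: "z^2 + x^2 + y^2 + 3/4 * m^2 + 3/2 * w = 1"
    and n1: "1 \<le> n" and m: "m < 0" and wd: "w = - m * n"
    and Dwe: "Dw = 2 * (2 * (z^2 + x^2) - z) * w - 4 * m * x * y"
    and ee: "e = - (2 - 2 * (z^2 + x^2)) * x * y / n + 3 * m * y^2 / n - 4 * x^2 * y^2 / n^2"
    and Due: "Du = 3 * (x^2 - y^2) + e"
    and ue: "u = x * y / n"
  shows "\<bar>Dw - 2/3 * (Dw * u + Du * w) - GG z w\<bar> \<le> 15 / n"
proof -
  note b = basic_pt[OF cons n1 m wd]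
  have n0: "0 < n" using n1 by simp
  have Y: "y^2 = 1 - z^2 - x^2 - 3/4 * m^2 - 3/2 * w" using cons by linarith
  have id1: "2 * (2 * (z^2 + x^2) - z) * w - 2 * w * (x^2 - y^2) - GG z w = - (3/2) * w * m^2"
    unfolding Y GG_def by algebra
  have id2: "Dw - 2/3 * (Dw * u + Du * w) - GG z w = - (3/2) * w * m^2 - 4 * m * x * y - 2/3 * Dw * u - 2/3 * w * e"
    using id1 unfolding Due Dwe by algebra
  have mb: "\<bar>m\<bar> \<le> 2/3 / n" "\<bar>m\<bar> \<le> 2/3" using b by auto
  have Dwb: "\<bar>Dw\<bar> \<le> 7"
  proof -
    have "\<bar>2 * (2 * (z^2 + x^2) - z)\<bar> \<le> 6" using b(3,10,11) unfolding abs_le_iff by argo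
    then have "\<bar>2 * (2 * (z^2 + x^2) - z) * w\<bar> \<le> 6 * (2/3)" unfolding abs_mult using b(1,2) by (intro mult_mono) auto
    moreover have "\<bar>4 * m * x * y\<bar> \<le> 4 * (2/3) * 1"
    proof -
      have "\<bar>4 * m * x * y\<bar> = 4 * \<bar>m\<bar> * \<bar>x * y\<bar>" by (simp add: abs_mult)
      also have "\<dots> \<le> 4 * (2/3) * 1" using mb(2) b(9) by (intro mult_mono) auto
      finally show ?thesis .
    qed
    ultimately show ?thesis unfolding Dwe abs_le_iff by argo
  qed
  have ub: "\<bar>u\<bar> \<le> 1 / n" unfolding ue using b(9) n0 by (simp add: abs_divide divide_right_mono)
  have eb: "\<bar>e\<bar> \<le> 8 / n" unfolding ee by (rule e_bound[OF cons n1 m wd])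
  have r1: "\<bar>(3/2) * w * m^2\<bar> \<le> 1 / n"
  proof -
    have "\<bar>(3/2) * w\<bar> \<le> 1" using b(1,2) by simp
    then have "\<bar>(3/2) * w * m^2\<bar> \<le> 1 * (1 / n)" unfolding abs_mult[of "(3/2) * w"] using b(8) by (intro mult_mono) auto
    then show ?thesis by simp
  qed
  have r2: "\<bar>4 * m * x * y\<bar> \<le> 3 / n"
  proof -
    have "\<bar>4 * m * x * y\<bar> = 4 * \<bar>m\<bar> * \<bar>x * y\<bar>" by (simp add: abs_mult)
    also have "\<dots> \<le> 4 * (2/3 / n) * 1" using mb(1) b(9) n0 by (intro mult_mono) auto
    also have "\<dots> \<le> 3 / n" using n0 by (simp add: field_simps)
    finally show ?thesis .
  qed
  have r3: "\<bar>2/3 * Dw * u\<bar> \<le> 5 / n"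
  proof -
    have "\<bar>Dw * u\<bar> \<le> 7 * (1 / n)" unfolding abs_mult using Dwb ub by (intro mult_mono) auto
    then have "\<bar>2/3 * Dw * u\<bar> \<le> 2/3 * (7 * (1 / n))" by (simp add: abs_mult mult.assoc)
    also have "\<dots> \<le> 5 / n" using n0 by (simp add: field_simps)
    finally show ?thesis .
  qed
  have r4: "\<bar>2/3 * w * e\<bar> \<le> 4 / n"
  proof -
    have "\<bar>2/3 * w\<bar> \<le> 1/2" using b(1,2) by simp
    then have "\<bar>2/3 * w * e\<bar> \<le> 1/2 * (8 / n)" unfolding abs_mult[of "2/3 * w"] using eb by (intro mult_mono) auto
    then show ?thesis by simp
  qed
  have "\<bar>- (3/2) * w * m^2 - 4 * m * x * y - 2/3 * Dw * u - 2/3 * w * e\<bar> \<le> 1 / n + 3 / n + 5 / n + 4 / n"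
    using r1 r2 r3 r4 unfolding abs_le_iff by argo
  also have "\<dots> \<le> 15 / n" using n0 by (simp add: field_simps)
  finally show ?thesis unfolding id2 .
qed


lemma deriv_bound_diff:
  fixes f f' :: "real \<Rightarrow> real"
  assumes ab: "a \<le> b" and d: "\<And>t. a \<le> t \<Longrightarrow> t \<le> b \<Longrightarrow> (f has_real_derivative f' t) (at t)"
    and bnd: "\<And>t. a \<le> t \<Longrightarrow> t \<le> b \<Longrightarrow> \<bar>f' t - c\<bar> \<le> M"
  shows "\<bar>f b - f a - c * (b - a)\<bar> \<le> M * (b - a)"
proof (cases "a = b")
  case True then show ?thesis by simp
next
  case False
  then have "a < b" using ab by simp
  from MVT2[OF this d] obtain z where z: "a < z" "z < b" "f b - f a = (b - a) * f' z" by auto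
  have "f b - f a - c * (b - a) = (b - a) * (f' z - c)" using z by (simp add: algebra_simps)
  then have "\<bar>f b - f a - c * (b - a)\<bar> = (b - a) * \<bar>f' z - c\<bar>" using \<open>a < b\<close> by (simp add: abs_mult)
  also have "\<dots> \<le> (b - a) * M" using bnd[of z] z \<open>a < b\<close> by (intro mult_left_mono) auto
  finally show ?thesis by (simp add: mult.commute)
qed

lemma s3: "sqrt 3 * sqrt 3 = (3::real)" by simp

locale whs =
  fixes N1 N2 N3 Sp Sm :: "real \<Rightarrow> real"
  assumes sol: "WH_solution N1 N2 N3 Sp Sm"
    and N1neg: "\<And>t. N1 t < 0" and N2pos: "\<And>t. N2 t > 0" and N3pos: "\<And>t. N3 t > 0"
begin

definition "nn = (\<lambda>t. N2 t + N3 t)"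
definition "yy = (\<lambda>t. sqrt 3 / 2 * (N2 t - N3 t))"
definition "ww = (\<lambda>t. - N1 t * nn t)"
definition "qq = (\<lambda>t. 2 * ((Sp t)^2 + (Sm t)^2))"
definition "uu = (\<lambda>t. Sm t * yy t / nn t)"
definition "PP = (\<lambda>t. - N1 t * N2 t * N3 t)"

lemma solt:
  "(N1 has_real_derivative ((qq t - 4 * Sp t) * N1 t)) (at t)"
  "(N2 has_real_derivative ((qq t + 2 * Sp t + 2 * sqrt 3 * Sm t) * N2 t)) (at t)"
  "(N3 has_real_derivative ((qq t + 2 * Sp t - 2 * sqrt 3 * Sm t) * N3 t)) (at t)"
  "(Sp has_real_derivative (- (2 - qq t) * Sp t - 3 * WH_Splus (N1 t) (N2 t) (N3 t))) (at t)"
  "(Sm has_real_derivative (- (2 - qq t) * Sm t - 3 * WH_Sminus (N1 t) (N2 t) (N3 t))) (at t)"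
  "(Sp t)^2 + (Sm t)^2 + (3/4) * ((N1 t)^2 + (N2 t)^2 + (N3 t)^2
            - 2 * (N1 t * N2 t + N2 t * N3 t + N1 t * N3 t)) = 1"
  using sol unfolding WH_solution_def WH_q_def qq_def by blast+

lemma nnpos: "nn t > 0" using N2pos[of t] N3pos[of t] by (simp add: nn_def)

lemma yy2: "(yy t)^2 = 3/4 * (N2 t - N3 t)^2"
  by (simp add: yy_def power_mult_distrib power_divide)

lemma cons: "(Sp t)^2 + (Sm t)^2 + (yy t)^2 + 3/4 * (N1 t)^2 + 3/2 * ww t = 1"
proof -
  have "(Sp t)^2 + (Sm t)^2 + (yy t)^2 + 3/4 * (N1 t)^2 + 3/2 * ww t =
     (Sp t)^2 + (Sm t)^2 + (3/4) * ((N1 t)^2 + (N2 t)^2 + (N3 t)^2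
            - 2 * (N1 t * N2 t + N2 t * N3 t + N1 t * N3 t))"
    unfolding yy2 by (simp add: ww_def nn_def power2_eq_square algebra_simps)
  then show ?thesis using solt(6)[of t] by linarith
qed

lemma wwpos: "ww t > 0" using mult_neg_pos[OF N1neg[of t] nnpos[of t]] by (simp add: ww_def)

lemma bnds:
  "(Sp t)^2 \<le> 1" "(Sm t)^2 \<le> 1" "(yy t)^2 \<le> 1" "ww t \<le> 2/3" "(N1 t)^2 \<le> 4/3"
  "(Sp t)^2 + (Sm t)^2 + (yy t)^2 \<le> 1"
proof -
  have "0 \<le> (Sp t)^2" "0 \<le> (Sm t)^2" "0 \<le> (yy t)^2" "0 \<le> (N1 t)^2" by simp_all
  then show "(Sp t)^2 \<le> 1" "(Sm t)^2 \<le> 1" "(yy t)^2 \<le> 1" "ww t \<le> 2/3" "(N1 t)^2 \<le> 4/3"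
    "(Sp t)^2 + (Sm t)^2 + (yy t)^2 \<le> 1"
    using cons[of t] wwpos[of t] by linarith+
qed

lemma absb: "\<bar>Sp t\<bar> \<le> 1" "\<bar>Sm t\<bar> \<le> 1" "\<bar>yy t\<bar> \<le> 1"
  using bnds[of t] by (simp_all add: abs_square_le_1)

lemma qqb0: "0 \<le> qq t"
  using zero_le_power2[of "Sp t"] zero_le_power2[of "Sm t"]
  unfolding qq_def by simp
lemma qqb2: "qq t \<le> 2"
proof -
  have "(Sp t)^2 + (Sm t)^2 \<le> 1" using bnds(6)[of t] zero_le_power2[of "yy t"] by linarith
  then show ?thesis unfolding qq_def by simp
qed
lemmas qqb = qqb0 qqb2

lemma N1b: "\<bar>N1 t\<bar> * nn t \<le> 2/3"
  using bnds(4)[of t] N1neg[of t] by (simp add: ww_def)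

lemma dSp: "(Sp has_real_derivative (- (2 - qq t) * Sp t - 2 * (yy t)^2 + 3 * (N1 t)^2 + 3/2 * ww t)) (at t)"
proof -
  have "- (2 - qq t) * Sp t - 3 * WH_Splus (N1 t) (N2 t) (N3 t) = - (2 - qq t) * Sp t - 2 * (yy t)^2 + 3 * (N1 t)^2 + 3/2 * ww t"
    unfolding yy2 by (simp add: WH_Splus_def ww_def nn_def power2_eq_square algebra_simps)
  then show ?thesis by (rule DERIV_cong[OF solt(4)[of t]])
qed

lemma dSm: "(Sm has_real_derivative (- (2 - qq t) * Sm t - 3 * (nn t - N1 t) * yy t)) (at t)"
proof -
  have "- (2 - qq t) * Sm t - 3 * WH_Sminus (N1 t) (N2 t) (N3 t) = - (2 - qq t) * Sm t - 3 * (nn t - N1 t) * yy t"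
    by (simp add: WH_Sminus_def yy_def nn_def field_simps)
  then show ?thesis by (rule DERIV_cong[OF solt(5)[of t]])
qed

lemma dnn: "(nn has_real_derivative ((qq t + 2 * Sp t) * nn t + 4 * Sm t * yy t)) (at t)"
proof -
  have "((\<lambda>t. N2 t + N3 t) has_real_derivative (qq t + 2 * Sp t + 2 * sqrt 3 * Sm t) * N2 t + (qq t + 2 * Sp t - 2 * sqrt 3 * Sm t) * N3 t) (at t)"
    by (intro DERIV_add solt)
  moreover have "(qq t + 2 * Sp t + 2 * sqrt 3 * Sm t) * N2 t + (qq t + 2 * Sp t - 2 * sqrt 3 * Sm t) * N3 t = (qq t + 2 * Sp t) * nn t + 4 * Sm t * yy t"
    by (simp add: nn_def yy_def field_simps)
  ultimately show ?thesis by (simp add: nn_def[abs_def])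
qed

lemma dyy: "(yy has_real_derivative ((qq t + 2 * Sp t) * yy t + 3 * Sm t * nn t)) (at t)"
proof -
  have d0: "((\<lambda>t. sqrt 3 / 2 * (N2 t - N3 t)) has_real_derivative sqrt 3 / 2 * ((qq t + 2 * Sp t + 2 * sqrt 3 * Sm t) * N2 t - (qq t + 2 * Sp t - 2 * sqrt 3 * Sm t) * N3 t)) (at t)"
    by (intro DERIV_cmult DERIV_diff solt)
  have eq1: "(qq t + 2 * Sp t + 2 * sqrt 3 * Sm t) * N2 t - (qq t + 2 * Sp t - 2 * sqrt 3 * Sm t) * N3 t = (qq t + 2 * Sp t) * (N2 t - N3 t) + 2 * sqrt 3 * (Sm t * nn t)"
    by (simp add: nn_def algebra_simps)
  have g: "sqrt 3 / 2 * (A + 2 * sqrt 3 * B) = sqrt 3 / 2 * A + (sqrt 3 * sqrt 3) * B" for A B :: real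
    by (simp add: field_simps)
  have eq2: "sqrt 3 / 2 * ((qq t + 2 * Sp t) * (N2 t - N3 t) + 2 * sqrt 3 * (Sm t * nn t)) = (qq t + 2 * Sp t) * yy t + (sqrt 3 * sqrt 3) * (Sm t * nn t)"
    unfolding g by (simp add: yy_def)
  have eqf: "sqrt 3 / 2 * ((qq t + 2 * Sp t + 2 * sqrt 3 * Sm t) * N2 t - (qq t + 2 * Sp t - 2 * sqrt 3 * Sm t) * N3 t) = (qq t + 2 * Sp t) * yy t + 3 * Sm t * nn t"
    unfolding eq1 eq2 s3 by (simp only: mult.assoc)
  have d: "((\<lambda>t. sqrt 3 / 2 * (N2 t - N3 t)) has_real_derivative (qq t + 2 * Sp t) * yy t + 3 * Sm t * nn t) (at t)"
    by (rule DERIV_cong[OF d0 eqf])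
  show ?thesis using d by (simp only: yy_def[symmetric])
qed

lemma dww: "(ww has_real_derivative (2 * (qq t - Sp t) * ww t - 4 * N1 t * Sm t * yy t)) (at t)"
proof -
  have "((\<lambda>t. - N1 t * nn t) has_real_derivative - ((qq t - 4 * Sp t) * N1 t * nn t + ((qq t + 2 * Sp t) * nn t + 4 * Sm t * yy t) * N1 t)) (at t)"
    using DERIV_minus[OF DERIV_mult[OF solt(1) dnn]] by simp
  moreover have "- ((qq t - 4 * Sp t) * N1 t * nn t + ((qq t + 2 * Sp t) * nn t + 4 * Sm t * yy t) * N1 t) = 2 * (qq t - Sp t) * ww t - 4 * N1 t * Sm t * yy t"
    by (simp add: ww_def algebra_simps)
  ultimately show ?thesis by (simp add: ww_def[abs_def])
qed

lemma dPP: "(PP has_real_derivative (3 * qq t * PP t)) (at t)"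
proof -
  have "((\<lambda>t. - N1 t * N2 t * N3 t) has_real_derivative
     - ((qq t - 4 * Sp t) * N1 t * N2 t * N3 t + (qq t + 2 * Sp t + 2 * sqrt 3 * Sm t) * N2 t * N1 t * N3 t
        + (qq t + 2 * Sp t - 2 * sqrt 3 * Sm t) * N3 t * (N1 t * N2 t))) (at t)"
    using DERIV_minus[OF DERIV_mult[OF DERIV_mult[OF solt(1) solt(2)] solt(3)]] by (simp add: algebra_simps)
  moreover have "- ((qq t - 4 * Sp t) * N1 t * N2 t * N3 t + (qq t + 2 * Sp t + 2 * sqrt 3 * Sm t) * N2 t * N1 t * N3 t
        + (qq t + 2 * Sp t - 2 * sqrt 3 * Sm t) * N3 t * (N1 t * N2 t)) = 3 * qq t * PP t"
    by (simp add: PP_def algebra_simps)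
  ultimately show ?thesis by (simp add: PP_def[abs_def])
qed

definition "eu t = - (2 - qq t) * Sm t * yy t / nn t + 3 * N1 t * (yy t)^2 / nn t - 4 * (Sm t)^2 * (yy t)^2 / (nn t)^2"

lemma duu: "(uu has_real_derivative (3 * ((Sm t)^2 - (yy t)^2) + eu t)) (at t)"
proof -
  have n0: "nn t \<noteq> 0" using nnpos[of t] by simp
  have "((\<lambda>t. Sm t * yy t / nn t) has_real_derivative
     (((- (2 - qq t) * Sm t - 3 * (nn t - N1 t) * yy t) * yy t + ((qq t + 2 * Sp t) * yy t + 3 * Sm t * nn t) * Sm t) * nn t
       - Sm t * yy t * ((qq t + 2 * Sp t) * nn t + 4 * Sm t * yy t)) / (nn t * nn t)) (at t)"
    using DERIV_divide[OF DERIV_mult[OF dSm dyy] dnn n0] by simp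
  moreover have "(((- (2 - qq t) * Sm t - 3 * (nn t - N1 t) * yy t) * yy t + ((qq t + 2 * Sp t) * yy t + 3 * Sm t * nn t) * Sm t) * nn t
       - Sm t * yy t * ((qq t + 2 * Sp t) * nn t + 4 * Sm t * yy t)) / (nn t * nn t) = 3 * ((Sm t)^2 - (yy t)^2) + eu t"
    using n0 by (simp add: eu_def field_simps power2_eq_square)
  ultimately show ?thesis by (simp add: uu_def[abs_def])
qed


lemma PPpos: "PP t > 0"
proof -
  have "0 < (- N1 t) * N2 t * N3 t" using N1neg[of t] N2pos[of t] N3pos[of t] by (intro mult_pos_pos) auto
  then show ?thesis by (simp add: PP_def)
qed

lemma PP_le: "6 * PP t \<le> nn t"
proof -
  have a: "N2 t * N3 t \<le> (nn t)^2 / 4"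
    using zero_le_power2[of "N2 t - N3 t"] by (simp add: nn_def power2_eq_square algebra_simps)
  have "PP t = (- N1 t) * (N2 t * N3 t)" by (simp add: PP_def)
  also have "\<dots> \<le> (- N1 t) * ((nn t)^2 / 4)" using N1neg[of t] a by (intro mult_left_mono) auto
  also have "\<dots> = ww t * nn t / 4" by (simp add: ww_def power2_eq_square)
  also have "\<dots> \<le> (2/3) * nn t / 4" using bnds(4)[of t] nnpos[of t] by (intro divide_right_mono mult_right_mono) auto
  finally show ?thesis by simp
qed

lemma PP_mono: "s \<le> t \<Longrightarrow> PP s \<le> PP t"
  apply (rule DERIV_nonneg_imp_nondecreasing[of s t PP], assumption)
  using dPP qqb PPpos by (meson mult_nonneg_nonneg less_imp_le zero_le_numeral)

lemma uu_bnd: "\<bar>uu t\<bar> \<le> 1 / nn t"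
proof -
  have "\<bar>Sm t * yy t\<bar> \<le> 1" using absb[of t] by (simp add: abs_mult mult_le_one)
  then show ?thesis using nnpos[of t] by (simp add: uu_def abs_mult divide_right_mono)
qed

definition "DSp t = - (2 - qq t) * Sp t - 2 * (yy t)^2 + 3 * (N1 t)^2 + 3/2 * ww t"
definition "Du t = 3 * ((Sm t)^2 - (yy t)^2) + eu t"

lemma key_ineq:
  assumes c: "0 < c" "c \<le> nn t"
  shows "DSp t - Du t + (5 + 4 / c^2) * ((Sp t)^2 + (Sm t)^2) \<ge> 1/2"
proof -
  let ?z = "Sp t" and ?x = "Sm t" and ?y = "yy t" and ?n = "nn t" and ?q = "qq t"
  have n: "?n > 0" using nnpos by simp
  have a1: "- (2 - ?q) * ?z \<ge> - 2 * \<bar>?z\<bar>"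
  proof -
    have "\<bar>(2 - ?q) * ?z\<bar> \<le> 2 * \<bar>?z\<bar>" using qqb[of t] by (simp add: abs_mult mult_right_mono)
    then show ?thesis by linarith
  qed
  have a2: "3 * (N1 t)^2 + 3/2 * ww t \<ge> 1 - ?z^2 - ?x^2 - ?y^2"
    using cons[of t] zero_le_power2[of "N1 t"] by linarith
  have a: "DSp t \<ge> 1 - 2 * \<bar>?z\<bar> - ?z^2 - ?x^2 - 3 * ?y^2"
    using a1 a2 unfolding DSp_def by linarith
  have b1: "(2 - ?q) * ?x * ?y / ?n \<ge> - (2 * \<bar>?x\<bar> / ?n)"
  proof -
    have "\<bar>(2 - ?q) * ?x * ?y\<bar> \<le> 2 * \<bar>?x\<bar>"
    proof -
      have "\<bar>(2 - ?q) * ?x * ?y\<bar> = \<bar>2 - ?q\<bar> * (\<bar>?x\<bar> * \<bar>?y\<bar>)" by (simp add: abs_mult)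
      also have "\<dots> \<le> 2 * (\<bar>?x\<bar> * 1)" using qqb[of t] absb[of t]
        by (intro mult_mono) (auto intro: mult_left_mono)
      finally show ?thesis by simp
    qed
    then have "- 2 * \<bar>?x\<bar> \<le> (2 - ?q) * ?x * ?y" by linarith
    from divide_right_mono[OF this, of ?n] n show ?thesis by simp
  qed
  have b2: "- 3 * N1 t * ?y^2 / ?n \<ge> 0"
  proof -
    have "0 \<le> - 3 * N1 t" using N1neg[of t] by simp
    then have "0 \<le> (- 3 * N1 t) * ?y^2" using zero_le_power2[of "?y"] by (rule mult_nonneg_nonneg)
    then show ?thesis using n by (rule divide_nonneg_pos)
  qed
  have b3: "4 * ?x^2 * ?y^2 / ?n^2 \<ge> 0" by simp
  have b: "- Du t \<ge> 3 * ?y^2 - 3 * ?x^2 - 2 * \<bar>?x\<bar> / ?n"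
  proof -
    have "- eu t = (2 - ?q) * ?x * ?y / ?n + (- 3 * N1 t * ?y^2 / ?n) + 4 * ?x^2 * ?y^2 / ?n^2"
      unfolding eu_def using n by (simp add: field_simps)
    then have "- eu t \<ge> - (2 * \<bar>?x\<bar> / ?n)" using b1 b2 b3 by linarith
    then show ?thesis unfolding Du_def by (simp add: algebra_simps)
  qed
  have c1: "2 * \<bar>?z\<bar> \<le> 4 * ?z^2 + 1/4"
  proof -
    have "0 \<le> (2 * \<bar>?z\<bar> - 1/2)^2" by simp
    then show ?thesis by (simp add: power2_eq_square algebra_simps)
  qed
  have c2: "2 * \<bar>?x\<bar> / ?n \<le> 4 * ?x^2 / c^2 + 1/4"
  proof -
    have "2 * \<bar>?x\<bar> / ?n \<le> 2 * \<bar>?x\<bar> / c" using c n by (intro divide_left_mono) auto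
    moreover have "0 \<le> (2 * \<bar>?x\<bar> / c - 1/2)^2" by simp
    then have "2 * \<bar>?x\<bar> / c \<le> 4 * ?x^2 / c^2 + 1/4" using c
      by (simp add: power2_eq_square algebra_simps)
    ultimately show ?thesis by linarith
  qed
  have e: "(5 + 4 / c^2) * (?z^2 + ?x^2) = 5 * ?z^2 + 5 * ?x^2 + 4 * ?x^2 / c^2 + (4 / c^2) * ?z^2"
    by (simp add: algebra_simps)
  have f: "(4 / c^2) * ?z^2 \<ge> 0" by simp
  show ?thesis using a b c1 c2 e f zero_le_power2[of ?x] by linarith
qed


lemma dSp': "(Sp has_real_derivative DSp t) (at t)" using dSp unfolding DSp_def .
lemma duu': "(uu has_real_derivative Du t) (at t)" using duu unfolding Du_def .

lemma global:
  assumes n0: "n0 > 0"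
  shows "\<exists>T\<ge>0. \<forall>t\<ge>T. nn t \<ge> n0"
proof -
  define c where "c = 6 * PP 0"
  have c: "c > 0" using PPpos[of 0] by (simp add: c_def)
  have nc: "c \<le> nn t" if "t \<ge> 0" for t
    using PP_le[of t] PP_mono[OF that] by (simp add: c_def)
  define K where "K = 5 + 4 / c^2"
  have K: "K > 0" unfolding K_def by (simp add: add_pos_nonneg)
  define H where "H = (\<lambda>t. Sp t - uu t + K / 6 * ln (PP t) - t / 2)"
  have dH: "(H has_real_derivative (DSp t - Du t + K * ((Sp t)^2 + (Sm t)^2) - 1/2)) (at t)" for t
  proof -
    have dl: "((\<lambda>t. ln (PP t)) has_real_derivative (1 / PP t) * (3 * qq t * PP t)) (at t)"
      by (rule DERIV_chain2[OF DERIV_ln_divide[OF PPpos] dPP])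
    have d0: "(H has_real_derivative DSp t - Du t + K / 6 * ((1 / PP t) * (3 * qq t * PP t)) - 1 / 2) (at t)"
      unfolding H_def
      by (rule DERIV_diff[OF DERIV_add[OF DERIV_diff[OF dSp' duu'] DERIV_cmult[OF dl]] DERIV_cdivide[OF DERIV_ident]])
    have "K / 6 * ((1 / PP t) * (3 * qq t * PP t)) = K * ((Sp t)^2 + (Sm t)^2)"
      using PPpos[of t] by (simp add: qq_def field_simps)
    then have "DSp t - Du t + K / 6 * ((1 / PP t) * (3 * qq t * PP t)) - 1 / 2 = DSp t - Du t + K * ((Sp t)^2 + (Sm t)^2) - 1/2"
      by (simp only:)
    then show ?thesis by (rule DERIV_cong[OF d0])
  qed
  have Hmono: "H 0 \<le> H t" if "t \<ge> 0" for t
  proof (rule DERIV_nonneg_imp_nondecreasing[OF that])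
    fix x assume "0 \<le> x" "x \<le> t"
    then have "c \<le> nn x" using nc by simp
    from key_ineq[OF c this] have "0 \<le> DSp x - Du x + K * ((Sp x)^2 + (Sm x)^2) - 1/2"
      unfolding K_def by linarith
    with dH[of x] show "\<exists>y. (H has_real_derivative y) (at x) \<and> 0 \<le> y" by blast
  qed
  define T where "T = max 0 (2 * (K / 6 * ln (n0 / 6) - H 0 + 1 + 1 / c))"
  have "\<forall>t\<ge>T. nn t \<ge> n0"
  proof (intro allI impI)
    fix t assume tT: "T \<le> t"
    then have t0: "0 \<le> t" unfolding T_def by simp
    have u1: "uu t \<ge> - (1 / c)"
    proof -
      have "1 / nn t \<le> 1 / c" using nc[OF t0] c by (intro divide_left_mono) auto
      then show ?thesis using uu_bnd[of t] by linarith
    qed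
    have "K / 6 * ln (PP t) = H t - Sp t + uu t + t / 2" unfolding H_def by simp
    also have "\<dots> \<ge> H 0 - 1 - 1 / c + t / 2" using Hmono[OF t0] absb(1)[of t] u1 by linarith
    finally have "K / 6 * ln (PP t) \<ge> H 0 - 1 - 1 / c + t / 2" .
    moreover have "2 * (K / 6 * ln (n0 / 6) - H 0 + 1 + 1 / c) \<le> t" using tT unfolding T_def by simp
    then have "H 0 - 1 - 1 / c + t / 2 \<ge> K / 6 * ln (n0 / 6)" by argo
    ultimately have "K / 6 * ln (n0 / 6) \<le> K / 6 * ln (PP t)" by linarith
    then have "ln (n0 / 6) \<le> ln (PP t)" using K by simp
    then have "n0 / 6 \<le> PP t" using n0 PPpos[of t] by simp
    then show "nn t \<ge> n0" using PP_le[of t] by linarith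
  qed
  then show ?thesis unfolding T_def by (intro exI[of _ T]) (simp add: T_def)
qed

end

lemma D_bnd:
  fixes z x y m w n :: real
  assumes cons: "z^2 + x^2 + y^2 + 3/4 * m^2 + 3/2 * w = 1"
    and n1: "1 \<le> n" and m: "m < 0" and wd: "w = - m * n"
  shows "\<bar>- (2 - 2 * (z^2 + x^2)) * z - 2 * y^2 + 3 * m^2 + 3/2 * w\<bar> \<le> 9"
proof -
  note b = basic_pt[OF cons n1 m wd]
  have "\<bar>(2 - 2 * (z^2 + x^2)) * z\<bar> \<le> 2 * 1" unfolding abs_mult using b(3,10,11) by (intro mult_mono) auto
  moreover have "y^2 \<le> 1" using b(5) by (simp add: abs_square_le_1)
  moreover have "1 / n \<le> 1" using n1 by simp
  then have "m^2 \<le> 1" using b(8) by linarith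
  moreover have "- (2 - 2 * (z^2 + x^2)) * z = - ((2 - 2 * (z^2 + x^2)) * z)" by (rule mult_minus_left)
  ultimately show ?thesis using b(1,2) zero_le_power2[of y] zero_le_power2[of m] unfolding abs_le_iff by argo
qed

lemma Dw_bnd:
  fixes z x y m w n :: real
  assumes cons: "z^2 + x^2 + y^2 + 3/4 * m^2 + 3/2 * w = 1"
    and n1: "1 \<le> n" and m: "m < 0" and wd: "w = - m * n"
  shows "\<bar>2 * (2 * (z^2 + x^2) - z) * w - 4 * m * x * y\<bar> \<le> 7"
proof -
  note b = basic_pt[OF cons n1 m wd]
  have "\<bar>2 * (2 * (z^2 + x^2) - z)\<bar> \<le> 6" using b(3,10,11) unfolding abs_le_iff by argo
  then have "\<bar>2 * (2 * (z^2 + x^2) - z) * w\<bar> \<le> 6 * (2/3)" unfolding abs_mult using b(1,2) by (intro mult_mono) auto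
  moreover have "\<bar>4 * m * x * y\<bar> \<le> 4 * (2/3) * 1"
  proof -
    have "\<bar>4 * m * x * y\<bar> = 4 * \<bar>m\<bar> * \<bar>x * y\<bar>" by (simp add: abs_mult)
    also have "\<dots> \<le> 4 * (2/3) * 1" using b(7) b(9) by (intro mult_mono) auto
    finally show ?thesis .
  qed
  ultimately show ?thesis unfolding abs_le_iff by argo
qed

context whs begin

lemma pt_hyps:
  shows "(Sp t)^2 + (Sm t)^2 + (yy t)^2 + 3/4 * (N1 t)^2 + 3/2 * ww t = 1"
    "N1 t < 0" "ww t = - N1 t * nn t"
    "DSp t = - (2 - 2 * ((Sp t)^2 + (Sm t)^2)) * Sp t - 2 * (yy t)^2 + 3 * (N1 t)^2 + 3/2 * ww t"
    "eu t = - (2 - 2 * ((Sp t)^2 + (Sm t)^2)) * Sm t * yy t / nn t + 3 * N1 t * (yy t)^2 / nn t - 4 * (Sm t)^2 * (yy t)^2 / (nn t)^2"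
    "Du t = 3 * ((Sm t)^2 - (yy t)^2) + eu t"
    "uu t = Sm t * yy t / nn t"
  using cons N1neg by (simp_all add: ww_def DSp_def qq_def eu_def Du_def uu_def)

lemma nn_deriv_lb: "(qq t + 2 * Sp t) * nn t + 4 * Sm t * yy t \<ge> - (nn t / 2) - 2"
proof -
  have a: "qq t + 2 * Sp t \<ge> - 1/2"
  proof -
    have "0 \<le> 2 * (Sp t + 1/2)^2" "0 \<le> 2 * (Sm t)^2" by simp_all
    moreover have "qq t + 2 * Sp t = 2 * (Sp t + 1/2)^2 + 2 * (Sm t)^2 - 1/2"
      by (simp add: qq_def power2_eq_square field_simps)
    ultimately show ?thesis by linarith
  qed
  have "(qq t + 2 * Sp t) * nn t \<ge> (- 1/2) * nn t" using a nnpos[of t] by (intro mult_right_mono) auto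
  moreover have "4 * Sm t * yy t \<ge> - 2"
  proof -
    have "0 \<le> 2 * (Sm t + yy t)^2" by simp
    moreover have "2 * (Sm t + yy t)^2 = 2 * (Sm t)^2 + 2 * (yy t)^2 + 4 * Sm t * yy t"
      by (simp add: power2_eq_square algebra_simps)
    ultimately show ?thesis using bnds(6)[of t] zero_le_power2[of "Sp t"] by linarith
  qed
  ultimately show ?thesis by linarith
qed

lemma nn_lower:
  assumes "a \<le> t"
  shows "nn t + 4 \<ge> (nn a + 4) * exp (- (t - a) / 2)"
proof -
  define g where "g = (\<lambda>s. (nn s + 4) * exp ((s - a) / 2))"
  have "g a \<le> g t"
  proof (rule DERIV_nonneg_imp_nondecreasing[OF assms])
    fix x assume "a \<le> x" "x \<le> t"
    have de: "((\<lambda>s. exp ((s - a) / 2)) has_real_derivative exp ((x - a) / 2) * (1 / 2)) (at x)"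
      by (rule DERIV_chain2[OF DERIV_exp]) (auto intro!: derivative_eq_intros)
    have dn4: "((\<lambda>s. nn s + 4) has_real_derivative (qq x + 2 * Sp x) * nn x + 4 * Sm x * yy x + 0) (at x)"
      by (rule DERIV_add[OF dnn DERIV_const])
    have dg: "(g has_real_derivative ((qq x + 2 * Sp x) * nn x + 4 * Sm x * yy x + 0) * exp ((x - a) / 2)
        + exp ((x - a) / 2) * (1 / 2) * (nn x + 4)) (at x)"
      unfolding g_def by (rule DERIV_mult[OF dn4 de])
    have "((qq x + 2 * Sp x) * nn x + 4 * Sm x * yy x + 0) * exp ((x - a) / 2)
        + exp ((x - a) / 2) * (1 / 2) * (nn x + 4) = exp ((x - a) / 2) * ((qq x + 2 * Sp x) * nn x + 4 * Sm x * yy x + (nn x + 4) / 2)"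
      by (simp add: algebra_simps)
    moreover have "0 \<le> (qq x + 2 * Sp x) * nn x + 4 * Sm x * yy x + (nn x + 4) / 2"
      using nn_deriv_lb[of x] by argo
    ultimately have "0 \<le> ((qq x + 2 * Sp x) * nn x + 4 * Sm x * yy x + 0) * exp ((x - a) / 2)
        + exp ((x - a) / 2) * (1 / 2) * (nn x + 4)" by simp
    with dg show "\<exists>y. (g has_real_derivative y) (at x) \<and> 0 \<le> y" by blast
  qed
  then have "nn a + 4 \<le> (nn t + 4) * exp ((t - a) / 2)" by (simp add: g_def)
  then have "(nn a + 4) * exp (- (t - a) / 2) \<le> (nn t + 4) * exp ((t - a) / 2) * exp (- (t - a) / 2)"
    by (intro mult_right_mono) auto
  also have "\<dots> = (nn t + 4) * exp ((t - a) / 2 + (- (t - a) / 2))" by (simp add: mult.assoc exp_add)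
  also have "\<dots> = nn t + 4"
  proof -
    have h: "(t - a) / 2 + (- (t - a) / 2) = (0::real)" by argo
    show ?thesis by (simp only: h exp_zero mult_1_right)
  qed
  finally show ?thesis .
qed

lemma nn_third:
  assumes "nn a \<ge> 12" "a \<le> t" "t \<le> a + 1"
  shows "nn t \<ge> nn a / 3"
proof -
  have "exp (- (t - a) / 2) \<ge> exp (- 1 / 2)" using assms(3) by simp
  moreover have "exp (- 1 / 2 :: real) \<ge> 1 / 2" using exp_ge_add_one_self[of "-1/2 :: real"] by simp
  ultimately have e: "exp (- (t - a) / 2) \<ge> 1 / 2" by linarith
  have "nn t + 4 \<ge> (nn a + 4) * exp (- (t - a) / 2)" by (rule nn_lower[OF assms(2)])
  moreover have "(nn a + 4) * exp (- (t - a) / 2) \<ge> (nn a + 4) * (1 / 2)"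
    using e nnpos[of a] by (intro mult_left_mono) auto
  ultimately show ?thesis using assms(1) by argo
qed


lemma rot:
  assumes ab: "a \<le> b" and nz: "\<And>t. a \<le> t \<Longrightarrow> t \<le> b \<Longrightarrow> Sm t \<noteq> 0"
    and mn: "\<And>t. a \<le> t \<Longrightarrow> t \<le> b \<Longrightarrow> m \<le> nn t"
  shows "(3 * m - 2) * (b - a) \<le> arctan (yy b / Sm b) - arctan (yy a / Sm a)"
proof -
  define g where "g = (\<lambda>s. arctan (yy s / Sm s) - (3 * m - 2) * s)"
  have "g a \<le> g b"
  proof (rule DERIV_nonneg_imp_nondecreasing[OF ab])
    fix x assume x: "a \<le> x" "x \<le> b"
    define X where "X = Sm x"
    define Y where "Y = yy x"
    have X0: "X \<noteq> 0" using nz[OF x] by (simp add: X_def)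
    define N where "N = ((qq x + 2 * Sp x) * yy x + 3 * Sm x * nn x) * Sm x - yy x * (- (2 - qq x) * Sm x - 3 * (nn x - N1 x) * yy x)"
    have d1: "((\<lambda>s. arctan (yy s / Sm s)) has_real_derivative inverse (1 + (yy x / Sm x)^2) * (N / (Sm x * Sm x))) (at x)"
      unfolding N_def by (rule DERIV_chain2[OF DERIV_arctan DERIV_divide[OF dyy dSm]]) (use X0 X_def in simp)
    have d2: "((\<lambda>s. (3 * m - 2) * s) has_real_derivative (3 * m - 2) * 1) (at x)"
      by (rule DERIV_cmult[OF DERIV_ident])
    have dg: "(g has_real_derivative inverse (1 + (yy x / Sm x)^2) * (N / (Sm x * Sm x)) - (3 * m - 2) * 1) (at x)"
      unfolding g_def by (rule DERIV_diff[OF d1 d2])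
    have S: "X^2 + Y^2 > 0" using X0 by (simp add: add_pos_nonneg)
    have e1: "inverse (1 + (yy x / Sm x)^2) * (N / (Sm x * Sm x)) = N / (X^2 + Y^2)"
      using X0 unfolding X_def[symmetric] Y_def[symmetric] by (simp add: field_simps power2_eq_square)
    have Nid: "N = (2 + 2 * Sp x) * (X * Y) + 3 * nn x * (X^2 + Y^2) + (- 3 * N1 x) * Y^2"
      unfolding N_def X_def Y_def by (simp add: power2_eq_square algebra_simps)
    have t1: "(2 + 2 * Sp x) * (X * Y) \<ge> - 2 * (X^2 + Y^2)"
    proof -
      have "0 \<le> (\<bar>X\<bar> - \<bar>Y\<bar>)^2" by simp
      then have h: "2 * \<bar>X * Y\<bar> \<le> X^2 + Y^2" by (simp add: power2_eq_square algebra_simps abs_mult)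
      have "\<bar>2 + 2 * Sp x\<bar> \<le> 4" using absb(1)[of x] unfolding abs_le_iff by argo
      then have "\<bar>(2 + 2 * Sp x) * (X * Y)\<bar> \<le> 4 * \<bar>X * Y\<bar>" unfolding abs_mult[of "2 + 2 * Sp x"] by (intro mult_right_mono) auto
      then show ?thesis using h unfolding abs_le_iff by argo
    qed
    have t2: "(- 3 * N1 x) * Y^2 \<ge> 0"
    proof -
      have "0 \<le> - 3 * N1 x" using N1neg[of x] by simp
      then show ?thesis using zero_le_power2[of Y] by (rule mult_nonneg_nonneg)
    qed
    have t3: "3 * nn x * (X^2 + Y^2) \<ge> 3 * m * (X^2 + Y^2)" using mn[OF x] S by (intro mult_right_mono) auto
    have "N \<ge> (3 * m - 2) * (X^2 + Y^2)"
    proof -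
      have "(3 * m - 2) * (X^2 + Y^2) = 3 * m * (X^2 + Y^2) - 2 * (X^2 + Y^2)" by (simp add: algebra_simps)
      then show ?thesis unfolding Nid using t1 t2 t3 by argo
    qed
    then have "N / (X^2 + Y^2) \<ge> 3 * m - 2" by (subst pos_le_divide_eq[OF S])
    then have "0 \<le> inverse (1 + (yy x / Sm x)^2) * (N / (Sm x * Sm x)) - (3 * m - 2) * 1" unfolding e1 by simp
    with dg show "\<exists>y. (g has_real_derivative y) (at x) \<and> 0 \<le> y" by blast
  qed
  then show ?thesis unfolding g_def by (simp add: algebra_simps)
qed

lemma gap:
  assumes ab: "a < b" and nz: "\<And>t. a < t \<Longrightarrow> t < b \<Longrightarrow> Sm t \<noteq> 0"
    and mn: "\<And>t. a < t \<Longrightarrow> t < b \<Longrightarrow> m \<le> nn t" and k: "0 < 3 * m - 2"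
  shows "(3 * m - 2) * (b - a) \<le> pi"
proof (rule ccontr)
  assume H: "\<not> ?thesis"
  define k where "k = 3 * m - 2"
  have k0: "0 < k" using k by (simp add: k_def)
  define d where "d = (k * (b - a) - pi) / (2 * k)"
  have d0: "0 < d" using H k0 unfolding d_def k_def[symmetric] by (simp add: field_simps)
  have d1: "d < (b - a) / 2" using k0 pi_gt_zero unfolding d_def by (simp add: field_simps)
  have R: "k * ((b - d) - (a + d)) \<le> arctan (yy (b - d) / Sm (b - d)) - arctan (yy (a + d) / Sm (a + d))"
    unfolding k_def by (rule rot) (use d0 d1 nz mn in auto)
  have "k * ((b - d) - (a + d)) = pi" using k0 unfolding d_def by (simp add: field_simps)
  moreover have "arctan (yy (b - d) / Sm (b - d)) - arctan (yy (a + d) / Sm (a + d)) < pi"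
    using arctan_ubound[of "yy (b - d) / Sm (b - d)"] arctan_lbound[of "yy (a + d) / Sm (a + d)"] by linarith
  ultimately show False using R by linarith
qed

lemma dt_bound:
  assumes cz: "consecutive_zeros Sm ta tb" and na: "nn ta \<ge> 100"
  shows "tb - ta \<le> 5 / nn ta" "\<And>t. ta \<le> t \<Longrightarrow> t \<le> tb \<Longrightarrow> nn t \<ge> nn ta / 3"
proof -
  have ab: "ta < tb" and nz: "\<And>t. ta < t \<Longrightarrow> t < tb \<Longrightarrow> Sm t \<noteq> 0"
    using cz unfolding consecutive_zeros_def by auto
  define b1 where "b1 = min tb (ta + 1)"
  have b1: "ta < b1" using ab by (simp add: b1_def)
  have G: "(3 * (nn ta / 3) - 2) * (b1 - ta) \<le> pi"
    by (rule gap[OF b1]) (use nz nn_third na in \<open>auto simp: b1_def\<close>)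
  have "(nn ta - 2) * (b1 - ta) \<le> 4" using G pi_less_4 by simp
  then have "b1 - ta \<le> 4 / (nn ta - 2)" using na by (simp add: field_simps)
  also have "4 / (nn ta - 2) \<le> 5 / nn ta" using na by (simp add: field_simps)
  finally have bb: "b1 - ta \<le> 5 / nn ta" .
  moreover have "5 / nn ta < 1" using na by simp
  ultimately have "b1 = tb" unfolding b1_def by (simp add: min_def split: if_splits)
  with bb show "tb - ta \<le> 5 / nn ta" by simp
  fix t assume "ta \<le> t" "t \<le> tb"
  moreover have "tb \<le> ta + 1" using \<open>b1 = tb\<close> by (simp add: b1_def)
  ultimately show "nn t \<ge> nn ta / 3" using nn_third na by simp
qed


lemma local_est:
  assumes cz: "consecutive_zeros Sm ta tb" and na: "nn ta \<ge> 100"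
  shows "\<bar>Sp tb - Sp ta - FF (Sp ta) (ww ta) * (tb - ta)\<bar> \<le> 4000 / (nn ta)^2"
    "\<bar>ww tb - ww ta - GG (Sp ta) (ww ta) * (tb - ta)\<bar> \<le> 4000 / (nn ta)^2"
proof -
  have ab: "ta < tb" and z1: "Sm ta = 0" and z2: "Sm tb = 0"
    using cz unfolding consecutive_zeros_def by auto
  note dt = dt_bound[OF cz na]
  define A where "A = nn ta"
  have A0: "A \<ge> 100" using na by (simp add: A_def)
  define dl where "dl = tb - ta"
  have dl: "0 \<le> dl" "dl \<le> 5 / A" using ab dt(1) by (auto simp: dl_def A_def)
  have nI: "nn t \<ge> A / 3" "1 \<le> nn t" if "ta \<le> t" "t \<le> tb" for t
    using dt(2)[OF that] A0 unfolding A_def by auto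
  have inv: "15 / nn t \<le> 45 / A" if "ta \<le> t" "t \<le> tb" for t
  proof -
    have "A / 3 \<le> nn t" using nI[OF that] by simp
    moreover have "0 < A / 3" using A0 by simp
    ultimately have "15 / nn t \<le> 15 / (A / 3)" by (intro divide_left_mono) auto
    then show ?thesis by simp
  qed
  note H = pt_hyps
  have DSpb: "\<bar>DSp t\<bar> \<le> 9" if "ta \<le> t" "t \<le> tb" for t
    unfolding H(4) by (rule D_bnd[OF H(1) nI(2)[OF that] H(2) H(3)])
  have Dwb: "\<bar>2 * (qq t - Sp t) * ww t - 4 * N1 t * Sm t * yy t\<bar> \<le> 7" if "ta \<le> t" "t \<le> tb" for t
    unfolding qq_def by (rule Dw_bnd[OF H(1) nI(2)[OF that] H(2) H(3)])
  have zdiff: "\<bar>Sp t - Sp ta\<bar> \<le> 9 * dl" if "ta \<le> t" "t \<le> tb" for t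
  proof -
    have "\<bar>Sp t - Sp ta - 0 * (t - ta)\<bar> \<le> 9 * (t - ta)"
      by (rule deriv_bound_diff[OF that(1) dSp']) (use DSpb that in auto)
    then show ?thesis using that 
      by (simp add: dl_def; smt (verit, best) mult_left_mono)
  qed
  have wdiff: "\<bar>ww t - ww ta\<bar> \<le> 7 * dl" if "ta \<le> t" "t \<le> tb" for t
  proof -
    have "\<bar>ww t - ww ta - 0 * (t - ta)\<bar> \<le> 7 * (t - ta)"
      by (rule deriv_bound_diff[OF that(1) dww]) (use Dwb that in auto)
    then show ?thesis using that
      by (simp add: dl_def; smt (verit, best) mult_left_mono)
  qed
  have lipz: "\<bar>Sp t\<bar> \<le> 1" "0 \<le> ww t" "ww t \<le> 1" for t
    using absb(1)[of t] wwpos[of t] bnds(4)[of t] by auto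
  have dlA: "dl * A \<le> 5" using dl A0 by (simp add: field_simps)
  define V where "V = (\<lambda>t. Sp t - (Sp t + 1) * uu t / 3)"
  have dV: "(V has_real_derivative DSp t - ((DSp t + 0) * uu t + Du t * (Sp t + 1)) / 3) (at t)" for t
    unfolding V_def
    by (rule DERIV_diff[OF dSp' DERIV_cdivide[OF DERIV_mult[OF DERIV_add[OF dSp' DERIV_const] duu']]])
  have Vb: "\<bar>(DSp t - ((DSp t + 0) * uu t + Du t * (Sp t + 1)) / 3) - FF (Sp ta) (ww ta)\<bar> \<le> 535 / A"
    if "ta \<le> t" "t \<le> tb" for t
  proof -
    have a: "\<bar>DSp t - (DSp t * uu t + Du t * (Sp t + 1)) / 3 - FF (Sp t) (ww t)\<bar> \<le> 15 / nn t"
      by (rule V_pt[OF H(1) nI(2)[OF that] H(2) H(3) H(4) H(5) H(6) H(7)])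
    have b: "\<bar>FF (Sp t) (ww t) - FF (Sp ta) (ww ta)\<bar> \<le> 7 * \<bar>Sp t - Sp ta\<bar> + 5 * \<bar>ww t - ww ta\<bar>"
      by (rule FF_lip) (use lipz in auto)
    have c: "7 * \<bar>Sp t - Sp ta\<bar> + 5 * \<bar>ww t - ww ta\<bar> \<le> 98 * dl"
      using zdiff[OF that] wdiff[OF that] by argo
    have d: "98 * dl \<le> 490 / A" using dl(2) by (simp add: field_simps)
    show ?thesis using a b c d inv[OF that] unfolding abs_le_iff by argo
  qed
  have E1: "\<bar>V tb - V ta - FF (Sp ta) (ww ta) * (tb - ta)\<bar> \<le> 535 / A * (tb - ta)"
    by (rule deriv_bound_diff[OF less_imp_le[OF ab] dV Vb])
  have Vz: "V ta = Sp ta" "V tb = Sp tb" using z1 z2 by (simp_all add: V_def uu_def)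
  have "535 / A * (tb - ta) \<le> 535 / A * (5 / A)" using dl A0 by (intro mult_left_mono) (auto simp: dl_def)
  also have "\<dots> = 2675 / A^2" by (simp add: power2_eq_square)
  also have "\<dots> \<le> 4000 / A^2" by (intro divide_right_mono) auto
  finally show "\<bar>Sp tb - Sp ta - FF (Sp ta) (ww ta) * (tb - ta)\<bar> \<le> 4000 / (nn ta)^2"
    using E1 Vz unfolding A_def by simp
  define W where "W = (\<lambda>t. ww t - 2/3 * (ww t * uu t))"
  have dW: "(W has_real_derivative (2 * (qq t - Sp t) * ww t - 4 * N1 t * Sm t * yy t)
       - 2/3 * ((2 * (qq t - Sp t) * ww t - 4 * N1 t * Sm t * yy t) * uu t + Du t * ww t)) (at t)" for t
    unfolding W_def by (rule DERIV_diff[OF dww DERIV_cmult[OF DERIV_mult[OF dww duu']]])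
  have Wb: "\<bar>((2 * (qq t - Sp t) * ww t - 4 * N1 t * Sm t * yy t)
       - 2/3 * ((2 * (qq t - Sp t) * ww t - 4 * N1 t * Sm t * yy t) * uu t + Du t * ww t)) - GG (Sp ta) (ww ta)\<bar> \<le> 735 / A"
    if "ta \<le> t" "t \<le> tb" for t
  proof -
    have a: "\<bar>(2 * (qq t - Sp t) * ww t - 4 * N1 t * Sm t * yy t)
       - 2/3 * ((2 * (qq t - Sp t) * ww t - 4 * N1 t * Sm t * yy t) * uu t + Du t * ww t) - GG (Sp t) (ww t)\<bar> \<le> 15 / nn t"
      by (rule W_pt[OF H(1) nI(2)[OF that] H(2) H(3) _ H(5) H(6) H(7)]) (simp add: qq_def)
    have b: "\<bar>GG (Sp t) (ww t) - GG (Sp ta) (ww ta)\<bar> \<le> 6 * \<bar>Sp t - Sp ta\<bar> + 12 * \<bar>ww t - ww ta\<bar>"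
      by (rule GG_lip) (use lipz in auto)
    have c: "6 * \<bar>Sp t - Sp ta\<bar> + 12 * \<bar>ww t - ww ta\<bar> \<le> 138 * dl"
      using zdiff[OF that] wdiff[OF that] by argo
    have d: "138 * dl \<le> 690 / A" using dl(2) by (simp add: field_simps)
    show ?thesis using a b c d inv[OF that] unfolding abs_le_iff by argo
  qed
  have E2: "\<bar>W tb - W ta - GG (Sp ta) (ww ta) * (tb - ta)\<bar> \<le> 735 / A * (tb - ta)"
    by (rule deriv_bound_diff[OF less_imp_le[OF ab] dW Wb])
  have Wz: "W ta = ww ta" "W tb = ww tb" using z1 z2 by (simp_all add: W_def uu_def)
  have "735 / A * (tb - ta) \<le> 735 / A * (5 / A)" using dl A0 by (intro mult_left_mono) (auto simp: dl_def)
  also have "\<dots> = 3675 / A^2" by (simp add: power2_eq_square)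
  also have "\<dots> \<le> 4000 / A^2" by (intro divide_right_mono) auto
  finally show "\<bar>ww tb - ww ta - GG (Sp ta) (ww ta) * (tb - ta)\<bar> \<le> 4000 / (nn ta)^2"
    using E2 Wz unfolding A_def by simp
qed

end

theorem mainTheorem17:
  shows "\<exists>C::real. \<forall>N1 N2 N3 Sp Sm.
    WH_solution N1 N2 N3 Sp Sm \<and> (\<forall>t. N1 t < 0 \<and> N2 t > 0 \<and> N3 t > 0) \<longrightarrow>
    (\<exists>T::real. \<forall>ta tb.
       consecutive_zeros Sm ta tb \<and> ta \<ge> T \<and>
       sqrt ((Sm ta)^2 + (3/4) * (N2 ta - N3 ta)^2) \<ge> (N2 ta + N3 ta) powr (-1/2) \<longrightarrow>
       (let z1 = Sp ta; z2 = Sp tb;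
            w1 = - (N1 ta * (N2 ta + N3 ta)); w2 = - (N1 tb * (N2 tb + N3 tb));
            bound = C * (N2 ta + N3 ta) powr (-3/2)
        in \<bar>(z2 - z1) - (- (1 - z1) * (1 + z1)^2 + (3/2) * w1 * (2 - z1)) * (tb - ta)\<bar> \<le> bound
         \<and> \<bar>(w2 - w1) - (2 * z1^2 - 2 * z1 + 2 - 3 * w1) * w1 * (tb - ta)\<bar> \<le> bound))"
proof (rule exI[of _ 4000], intro allI impI)
  fix N1 N2 N3 Sp Sm :: "real \<Rightarrow> real"
  assume A: "WH_solution N1 N2 N3 Sp Sm \<and> (\<forall>t. N1 t < 0 \<and> N2 t > 0 \<and> N3 t > 0)"
  interpret whs N1 N2 N3 Sp Sm using A by unfold_locales auto
  obtain T where T: "\<forall>t\<ge>T. nn t \<ge> 100" using global[of 100] by auto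
  show "\<exists>T::real. \<forall>ta tb.
       consecutive_zeros Sm ta tb \<and> ta \<ge> T \<and>
       sqrt ((Sm ta)^2 + (3/4) * (N2 ta - N3 ta)^2) \<ge> (N2 ta + N3 ta) powr (-1/2) \<longrightarrow>
       (let z1 = Sp ta; z2 = Sp tb;
            w1 = - (N1 ta * (N2 ta + N3 ta)); w2 = - (N1 tb * (N2 tb + N3 tb));
            bound = 4000 * (N2 ta + N3 ta) powr (-3/2)
        in \<bar>(z2 - z1) - (- (1 - z1) * (1 + z1)^2 + (3/2) * w1 * (2 - z1)) * (tb - ta)\<bar> \<le> bound
         \<and> \<bar>(w2 - w1) - (2 * z1^2 - 2 * z1 + 2 - 3 * w1) * w1 * (tb - ta)\<bar> \<le> bound)"
  proof (rule exI[of _ T], intro allI impI)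
    fix ta tb
    assume B: "consecutive_zeros Sm ta tb \<and> ta \<ge> T \<and>
       sqrt ((Sm ta)^2 + (3/4) * (N2 ta - N3 ta)^2) \<ge> (N2 ta + N3 ta) powr (-1/2)"
    have cz: "consecutive_zeros Sm ta tb" using B by simp
    have na: "nn ta \<ge> 100" using T B by auto
    note L = local_est[OF cz na]
    have w: "- (N1 ta * nn ta) = ww ta" "- (N1 tb * nn tb) = ww tb"
      by (simp_all add: ww_def)
    have nd: "N2 ta + N3 ta = nn ta" "N2 tb + N3 tb = nn tb" by (simp_all add: nn_def)
    have pw: "4000 / (nn ta)^2 \<le> 4000 * (nn ta) powr (-3/2)"
    proof -
      have "(nn ta) powr (-2) \<le> (nn ta) powr (-3/2)" using na by (intro powr_mono) auto
      moreover have "(nn ta) powr (-2) = 1 / (nn ta)^2" using na by (simp add: powr_minus_divide)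
      ultimately show ?thesis by simp
    qed
    show "let z1 = Sp ta; z2 = Sp tb;
            w1 = - (N1 ta * (N2 ta + N3 ta)); w2 = - (N1 tb * (N2 tb + N3 tb));
            bound = 4000 * (N2 ta + N3 ta) powr (-3/2)
        in \<bar>(z2 - z1) - (- (1 - z1) * (1 + z1)^2 + (3/2) * w1 * (2 - z1)) * (tb - ta)\<bar> \<le> bound
         \<and> \<bar>(w2 - w1) - (2 * z1^2 - 2 * z1 + 2 - 3 * w1) * w1 * (tb - ta)\<bar> \<le> bound"
      unfolding Let_def nd unfolding w using order_trans[OF L(1) pw] order_trans[OF L(2) pw]
      unfolding FF_def GG_def by simp
  qed
qed

end
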